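(* Let $W$ be the Witt algebra with basis $\{x_n\mid n\in\mathbb{Z}\}$ and bracket $[x_m,x_n]=(n-m)x_{m+n}$. For $\beta\in\mathbb{C}$ and $k\in\mathbb{Z}$ with $\beta-k\neq0$, the product $$x_mx_n=(n+k)x_{m+n}\ \text{ if } m+n+k\neq0,\qquad x_{-n-k}x_n=\frac{(n+k)(\beta-n-k)}{\beta-k}x_{-k},$$ defines a left-symmetric algebra $V^{\beta,k}$ on the underlying space of $W$ whose commutator $x_mx_n-x_nx_m$ is the bracket of $W$.
   Context: A left-symmetric algebra is a vector space with bilinear product satisfying $(xy)z-x(yz)=(yx)z-y(xz)$ for all $x,y,z$. *)

theory Defs
  imports Complex_Main "HOL-Library.Poly_Mapping"
begin

text \<open>The underlying space of the Witt algebra: finitely supported coefficient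
functions, i.e. the complex vector space with basis x_n (n in Z), where
x_n = Poly_Mapping.single n 1.\<close>

type_synonym wspace = "int \<Rightarrow>\<^sub>0 complex"

definition basis_x :: "int \<Rightarrow> wspace" where
  "basis_x n = Poly_Mapping.single n 1"

definition bilin_ext :: "(int \<Rightarrow> int \<Rightarrow> complex) \<Rightarrow> wspace \<Rightarrow> wspace \<Rightarrow> wspace" where
  "bilin_ext c a b =
     (\<Sum>m\<in>Poly_Mapping.keys a. \<Sum>n\<in>Poly_Mapping.keys b.
        Poly_Mapping.single (m + n) (Poly_Mapping.lookup a m * Poly_Mapping.lookup b n * c m n))"

definition witt_bracket :: "wspace \<Rightarrow> wspace \<Rightarrow> wspace" where
  "witt_bracket = bilin_ext (\<lambda>m n. of_int (n - m))"

definition V_coeff :: "complex \<Rightarrow> int \<Rightarrow> int \<Rightarrow> int \<Rightarrow> complex" where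
  "V_coeff \<beta> k m n =
     (if m + n + k \<noteq> 0 then of_int (n + k)
      else of_int (n + k) * (\<beta> - of_int (n + k)) / (\<beta> - of_int k))"

definition V_prod :: "complex \<Rightarrow> int \<Rightarrow> wspace \<Rightarrow> wspace \<Rightarrow> wspace" where
  "V_prod \<beta> k = bilin_ext (V_coeff \<beta> k)"

definition left_symmetric :: "('v::ab_group_add \<Rightarrow> 'v \<Rightarrow> 'v) \<Rightarrow> bool" where
  "left_symmetric p \<longleftrightarrow>
     (\<forall>x y z. p (p x y) z - p x (p y z) = p (p y x) z - p y (p x z))"

end

theory Submission
  imports Defs
begin

lemma pm_induct:
  fixes f :: wspace
  assumes "P 0" and "\<And>m r g. P g \<Longrightarrow> P (Poly_Mapping.single m r + g)"
  shows "P f"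
proof (induct f rule: Poly_Mapping.update_induct)
  case const then show ?case using assms(1) .
next
  case (update f a b)
  have "Poly_Mapping.update a b f = Poly_Mapping.single a b + f"
    using update(1)
    by (intro poly_mapping_eqI)
       (auto simp: Poly_Mapping.update.rep_eq lookup_add lookup_single in_keys_iff when_def)
  then show ?case using assms(2) update(3) by simp
qed

lemma bilin_ext_sup:
  assumes "finite S" "finite T" "Poly_Mapping.keys a \<subseteq> S" "Poly_Mapping.keys b \<subseteq> T"
  shows "bilin_ext c a b = (\<Sum>m\<in>S. \<Sum>n\<in>T.
        Poly_Mapping.single (m + n) (Poly_Mapping.lookup a m * Poly_Mapping.lookup b n * c m n))"
proof -
  have "bilin_ext c a b = (\<Sum>m\<in>Poly_Mapping.keys a. \<Sum>n\<in>T.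
        Poly_Mapping.single (m + n) (Poly_Mapping.lookup a m * Poly_Mapping.lookup b n * c m n))"
    unfolding bilin_ext_def
    by (intro sum.cong refl sum.mono_neutral_left assms) (auto simp: in_keys_iff)
  also have "\<dots> = (\<Sum>m\<in>S. \<Sum>n\<in>T.
        Poly_Mapping.single (m + n) (Poly_Mapping.lookup a m * Poly_Mapping.lookup b n * c m n))"
    by (intro sum.mono_neutral_left assms) (auto simp: in_keys_iff)
  finally show ?thesis .
qed

lemma bilin_add_left: "bilin_ext c (a + a') b = bilin_ext c a b + bilin_ext c a' b"
proof -
  let ?S = "Poly_Mapping.keys a \<union> Poly_Mapping.keys a'"
  let ?T = "Poly_Mapping.keys b"
  have "bilin_ext c (a + a') b = (\<Sum>m\<in>?S. \<Sum>n\<in>?T.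
        Poly_Mapping.single (m + n) (Poly_Mapping.lookup (a+a') m * Poly_Mapping.lookup b n * c m n))"
    by (rule bilin_ext_sup) (auto dest: set_mp[OF keys_add])
  also have "\<dots> = (\<Sum>m\<in>?S. \<Sum>n\<in>?T.
        Poly_Mapping.single (m + n) (Poly_Mapping.lookup a m * Poly_Mapping.lookup b n * c m n)) +
       (\<Sum>m\<in>?S. \<Sum>n\<in>?T.
        Poly_Mapping.single (m + n) (Poly_Mapping.lookup a' m * Poly_Mapping.lookup b n * c m n))"
    by (simp add: lookup_add distrib_right single_add sum.distrib)
  also have "\<dots> = bilin_ext c a b + bilin_ext c a' b"
    by (subst (1 2) bilin_ext_sup[where S="?S" and T="?T"]) auto
  finally show ?thesis .
qed

lemma bilin_add_right: "bilin_ext c a (b + b') = bilin_ext c a b + bilin_ext c a b'"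
proof -
  let ?S = "Poly_Mapping.keys a"
  let ?T = "Poly_Mapping.keys b \<union> Poly_Mapping.keys b'"
  have "bilin_ext c a (b + b') = (\<Sum>m\<in>?S. \<Sum>n\<in>?T.
        Poly_Mapping.single (m + n) (Poly_Mapping.lookup a m * Poly_Mapping.lookup (b+b') n * c m n))"
    by (rule bilin_ext_sup) (auto dest: set_mp[OF keys_add])
  also have "\<dots> = (\<Sum>m\<in>?S. \<Sum>n\<in>?T.
        Poly_Mapping.single (m + n) (Poly_Mapping.lookup a m * Poly_Mapping.lookup b n * c m n)) +
       (\<Sum>m\<in>?S. \<Sum>n\<in>?T.
        Poly_Mapping.single (m + n) (Poly_Mapping.lookup a m * Poly_Mapping.lookup b' n * c m n))"
    by (simp add: lookup_add distrib_left distrib_right single_add sum.distrib)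
  also have "\<dots> = bilin_ext c a b + bilin_ext c a b'"
    by (subst (1 2) bilin_ext_sup[where S="?S" and T="?T"]) auto
  finally show ?thesis .
qed

lemma bilin_zero_left [simp]: "bilin_ext c 0 b = 0"
  by (simp add: bilin_ext_def)

lemma bilin_zero_right [simp]: "bilin_ext c a 0 = 0"
  by (simp add: bilin_ext_def)

lemma bilin_single:
  "bilin_ext c (Poly_Mapping.single m r) (Poly_Mapping.single n s) = Poly_Mapping.single (m+n) (r * s * c m n)"
  by (auto simp: bilin_ext_def)

definition cc :: "complex \<Rightarrow> complex \<Rightarrow> complex \<Rightarrow> complex \<Rightarrow> complex" where
  "cc b K x y = (if x + y + K \<noteq> 0 then y + K else (y + K) * (b - y - K) / (b - K))"
lemma cc_ls:
  assumes "b - K \<noteq> 0"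
  shows "cc b K m n * cc b K (m+n) q - cc b K n q * cc b K m (n+q)
       = cc b K n m * cc b K (n+m) q - cc b K m q * cc b K n (m+q)"
proof -
  have B1: "n + m + q + K = m + n + q + K" "m + (n + q) + K = m + n + q + K" "n + (m + q) + K = m + n + q + K"
    "n + m + K = m + n + K" by (simp_all add: algebra_simps)
  show ?thesis
  using assms unfolding cc_def B1
  apply (cases "m+n+K=0"; cases "m+n+q+K=0"; cases "n+q+K=0"; cases "m+q+K=0")
  apply (simp_all add: add_eq_0_iff)
  apply (simp_all add: divide_simps)
  apply (simp_all add: algebra_simps)
  done
qed
lemma cc_comm:
  assumes "b - K \<noteq> 0"
  shows "cc b K m n - cc b K n m = n - m"
proof -
  have B: "n + m + K = m + n + K" by simp
  show ?thesis
  using assms unfolding cc_def B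
  apply (cases "m+n+K=0")
  apply (simp_all add: add_eq_0_iff)
  apply (simp_all add: divide_simps)
  apply (simp_all add: algebra_simps)
  done
qed

lemma V_cc: "V_coeff b k m n = cc b (of_int k) (of_int m) (of_int n)"
proof -
  have "(m + n + k = 0) = (of_int m + of_int n + of_int k = (0::complex))"
    by (metis of_int_add of_int_eq_0_iff)
  then show ?thesis unfolding V_coeff_def cc_def by simp
qed

lemma add_diff4: "(a1 + a2) - (b1 + b2) = (c1 + c2) - (d1 + d2)"
  if "a1 - b1 = c1 - d1" "a2 - b2 = c2 - (d2::'a::ab_group_add)"
  using that by (simp add: algebra_simps)

lemma add_diff5: "(a1 + a2) - (b1 + b2) = c1 + c2"
  if "a1 - b1 = c1" "a2 - b2 = (c2::'a::ab_group_add)"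
  using that by (simp add: algebra_simps)

theorem theorem3p8:
  fixes \<beta> :: complex and k :: int
  assumes "\<beta> - of_int k \<noteq> 0"
  shows "left_symmetric (V_prod \<beta> k)
    \<and> (\<forall>a b. V_prod \<beta> k a b - V_prod \<beta> k b a = witt_bracket a b)"
proof -
  let ?p = "V_prod \<beta> k"
  have ne: "\<beta> - of_int k \<noteq> 0" by fact
  have padl: "?p (a + a') b = ?p a b + ?p a' b" for a a' b
    unfolding V_prod_def by (rule bilin_add_left)
  have padr: "?p a (b + b') = ?p a b + ?p a b'" for a b b'
    unfolding V_prod_def by (rule bilin_add_right)
  have ps: "?p (Poly_Mapping.single m r) (Poly_Mapping.single n s)
      = Poly_Mapping.single (m+n) (r * s * V_coeff \<beta> k m n)" for m n r s
    unfolding V_prod_def by (rule bilin_single)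
  have p0l: "?p 0 b = 0" and p0r: "?p a 0 = 0" for a b
    unfolding V_prod_def by simp_all
  have L1: "?p (?p (Poly_Mapping.single m r) (Poly_Mapping.single n s)) (Poly_Mapping.single q t)
      - ?p (Poly_Mapping.single m r) (?p (Poly_Mapping.single n s) (Poly_Mapping.single q t))
      = ?p (?p (Poly_Mapping.single n s) (Poly_Mapping.single m r)) (Poly_Mapping.single q t)
      - ?p (Poly_Mapping.single n s) (?p (Poly_Mapping.single m r) (Poly_Mapping.single q t))"
    for m n q r s t
  proof -
    have e: "V_coeff \<beta> k m n * V_coeff \<beta> k (m+n) q - V_coeff \<beta> k n q * V_coeff \<beta> k m (n+q)
       = V_coeff \<beta> k n m * V_coeff \<beta> k (n+m) q - V_coeff \<beta> k m q * V_coeff \<beta> k n (m+q)"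
      unfolding V_cc of_int_add using ne by (rule cc_ls)
    have "r * s * t * (V_coeff \<beta> k m n * V_coeff \<beta> k (m+n) q - V_coeff \<beta> k n q * V_coeff \<beta> k m (n+q))
       = r * s * t * (V_coeff \<beta> k n m * V_coeff \<beta> k (n+m) q - V_coeff \<beta> k m q * V_coeff \<beta> k n (m+q))"
      using e by simp
    then have e2: "r * s * V_coeff \<beta> k m n * t * V_coeff \<beta> k (m+n) q - r * (s * t * V_coeff \<beta> k n q) * V_coeff \<beta> k m (n+q)
       = s * r * V_coeff \<beta> k n m * t * V_coeff \<beta> k (n+m) q - s * (r * t * V_coeff \<beta> k m q) * V_coeff \<beta> k n (m+q)"
      by (simp add: algebra_simps)
    have "Poly_Mapping.single (m+n+q) (r * s * V_coeff \<beta> k m n * t * V_coeff \<beta> k (m+n) q) - Poly_Mapping.single (m+n+q) (r * (s * t * V_coeff \<beta> k n q) * V_coeff \<beta> k m (n+q))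
      = Poly_Mapping.single (m+n+q) (s * r * V_coeff \<beta> k n m * t * V_coeff \<beta> k (n+m) q) - Poly_Mapping.single (m+n+q) (s * (r * t * V_coeff \<beta> k m q) * V_coeff \<beta> k n (m+q))"
      unfolding single_diff[symmetric] e2 ..
    moreover have idx: "m+(n+q) = m+n+q" "n+m+q = m+n+q" "n+(m+q) = m+n+q" by simp_all
    ultimately show ?thesis by (simp only: ps idx)
  qed
  have L2: "?p (?p (Poly_Mapping.single m r) (Poly_Mapping.single n s)) z
      - ?p (Poly_Mapping.single m r) (?p (Poly_Mapping.single n s) z)
      = ?p (?p (Poly_Mapping.single n s) (Poly_Mapping.single m r)) z
      - ?p (Poly_Mapping.single n s) (?p (Poly_Mapping.single m r) z)" for m n r s z
    proof (induct z rule: pm_induct)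
      case 1 show ?case by (simp add: p0r p0l )
    next
      case (2 m' r' g) show ?case unfolding padr padl  by (rule add_diff4[OF L1 2])
    qed
  have L3: "?p (?p (Poly_Mapping.single m r) y) z - ?p (Poly_Mapping.single m r) (?p y z)
      = ?p (?p y (Poly_Mapping.single m r)) z - ?p y (?p (Poly_Mapping.single m r) z)" for m r y z
    proof (induct y rule: pm_induct)
      case 1 show ?case by (simp add: p0r p0l )
    next
      case (2 m' r' g) show ?case unfolding padr padl  by (rule add_diff4[OF L2 2])
    qed
  have L4: "?p (?p x y) z - ?p x (?p y z) = ?p (?p y x) z - ?p y (?p x z)" for x y z
    proof (induct x rule: pm_induct)
      case 1 show ?case by (simp add: p0r p0l )
    next
      case (2 m' r' g) show ?case unfolding padr padl  by (rule add_diff4[OF L3 2])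
    qed
  have wadl: "witt_bracket (a + a') b = witt_bracket a b + witt_bracket a' b" for a a' b
    unfolding witt_bracket_def by (rule bilin_add_left)
  have wadr: "witt_bracket a (b + b') = witt_bracket a b + witt_bracket a b'" for a b b'
    unfolding witt_bracket_def by (rule bilin_add_right)
  have w0l: "witt_bracket 0 b = 0" and w0r: "witt_bracket a 0 = 0" for a b
    unfolding witt_bracket_def by simp_all
  have C1: "?p (Poly_Mapping.single m r) (Poly_Mapping.single n s) - ?p (Poly_Mapping.single n s) (Poly_Mapping.single m r)
      = witt_bracket (Poly_Mapping.single m r) (Poly_Mapping.single n s)" for m n r s
  proof -
    have e: "V_coeff \<beta> k m n - V_coeff \<beta> k n m = of_int (n - m)"
      unfolding V_cc of_int_diff using ne by (rule cc_comm)
    have "r * s * V_coeff \<beta> k m n - s * r * V_coeff \<beta> k n m = r * s * of_int (n - m)"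
    proof -
      have "r * s * V_coeff \<beta> k m n - s * r * V_coeff \<beta> k n m = r * s * (V_coeff \<beta> k m n - V_coeff \<beta> k n m)"
        by (simp add: algebra_simps)
      then show ?thesis using e by simp
    qed
    then have "Poly_Mapping.single (m+n) (r * s * V_coeff \<beta> k m n) - Poly_Mapping.single (m+n) (s * r * V_coeff \<beta> k n m)
        = Poly_Mapping.single (m+n) (r * s * of_int (n - m))"
      by (simp only: single_diff[symmetric])
    then show ?thesis unfolding witt_bracket_def using ps
      by (simp add: bilin_single add.commute)
  qed
  have C2: "?p (Poly_Mapping.single m r) b - ?p b (Poly_Mapping.single m r)
      = witt_bracket (Poly_Mapping.single m r) b" for m r b
    proof (induct b rule: pm_induct)
      case 1 show ?case by (simp add: p0r p0l w0r)
    next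
      case (2 m' r' g) show ?case unfolding padr padl wadr by (rule add_diff5[OF C1 2])
    qed
  have C3: "?p a b - ?p b a = witt_bracket a b" for a b
    proof (induct a rule: pm_induct)
      case 1 show ?case by (simp add: p0r p0l w0l)
    next
      case (2 m' r' g) show ?case unfolding padr padl wadl by (rule add_diff5[OF C2 2])
    qed
  show ?thesis unfolding left_symmetric_def using L4 C3 by blast
qed

end
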